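(* Let $\mu\ge 0$. Then, for $y>0$ and $x\ge 0$: (i) $\dfrac{\partial^2 Q_{\mu}(x,y)}{\partial x^2}\le 0$ whenever $0<y\le \mu+1$ and $x\ge 0$, with equality only for $x=0$, $y=\mu+1$; (ii) $\dfrac{\partial^2 Q_{\mu}(x,y)}{\partial x^2}<0$ whenever $x>y-\mu-\tfrac12$; (iii) $\dfrac{\partial^2 Q_{\mu}(x,y)}{\partial x^2}>0$ whenever $x<y-\mu-1$.
   Context: For real $\mu$, $x>0$, $y\ge 0$, the generalized Marcum $Q$-function is $Q_{\mu}(x,y)=x^{\frac12(1-\mu)}\int_y^{\infty} t^{\frac12(\mu-1)}e^{-t-x}I_{\mu-1}(2\sqrt{xt})\,dt$, where $I_\nu$ is the modified Bessel function of the first kind; at $x=0$ it is defined by continuity, $Q_\mu(0,y)=\Gamma(\mu,y)/\Gamma(\mu)$ (the regularized upper incomplete gamma function), and derivatives at $x=0$ are one-sided. *)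

theory Defs
  imports "HOL-Analysis.Analysis"
begin

text \<open>Modified Bessel function of the first kind, real order nu, via its power series
  I_nu(z) = sum_k (z/2)^(2k+nu) / (k! Gamma(k+nu+1)); 1/Gamma is rGamma (zero at poles).\<close>
definition besselI :: "real \<Rightarrow> real \<Rightarrow> real" where
  "besselI nu z = (\<Sum>k. (z / 2) powr (2 * real k + nu) * rGamma (real k + nu + 1) / fact k)"

definition reg_upper_gamma :: "real \<Rightarrow> real \<Rightarrow> real" where
  "reg_upper_gamma a y = rGamma a * integral {y..} (\<lambda>t. t powr (a - 1) * exp (- t))"

definition marcum_Q :: "real \<Rightarrow> real \<Rightarrow> real \<Rightarrow> real" where
  "marcum_Q mu x y =
     (if x = 0 then reg_upper_gamma mu y
      else x powr ((1 - mu) / 2) *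
           integral {y..} (\<lambda>t. t powr ((mu - 1) / 2) * exp (- t - x) *
                               besselI (mu - 1) (2 * sqrt (x * t))))"

definition marcum_Q_dx :: "real \<Rightarrow> real \<Rightarrow> real \<Rightarrow> real" where
  "marcum_Q_dx mu y x =
     (THE D. ((\<lambda>s. marcum_Q mu s y) has_real_derivative D) (at x within {0..}))"

definition marcum_Q_dxx :: "real \<Rightarrow> real \<Rightarrow> real \<Rightarrow> real" where
  "marcum_Q_dxx mu y x =
     (THE D. ((\<lambda>s. marcum_Q_dx mu y s) has_real_derivative D) (at x within {0..}))"

end

theory Submission
  imports Defs "HOL-Real_Asymp.Real_Asymp"
begin

lemma rGamma_pos_real: "x > 0 \<Longrightarrow> rGamma x > (0::real)"
  by (simp add: rGamma_inverse_Gamma)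

lemma rGamma_nonneg_real: "rGamma x \<ge> (0::real)" if "x \<ge> 0"
proof (cases "x = 0")
  case False
  with that show ?thesis using rGamma_pos_real[of x] by auto
qed simp

lemma fact_Suc_real: "(fact (Suc k)::real) = (real k + 1) * fact k" by simp

lemma Suc_div_fact: "real (Suc k) / fact (Suc k) = (1::real) / fact k"
proof -
  have "(fact k::real) > 0" "real k + 1 > 0" by auto
  have "real (Suc k) / fact (Suc k) = (real k + 1) / ((real k + 1) * fact k)"
    by (simp add: fact_Suc_real add.commute del: fact_Suc)
  also have "\<dots> = 1 / fact k" using \<open>real k + 1 > 0\<close> by (intro nonzero_divide_mult_cancel_left) simp
  finally show ?thesis .
qed

definition Gs :: "real \<Rightarrow> real \<Rightarrow> real" where
  "Gs b z = (\<Sum>k. (rGamma (real k + b) / fact k) * z ^ k)"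

lemma summable_G:
  assumes b: "b \<ge> 0"
  shows "summable (\<lambda>k. (rGamma (real k + b) / fact k) * z ^ k)"
proof -
  obtain N :: nat where N: "real N \<ge> 2 * \<bar>z\<bar> + 1"
    using real_arch_simple by blast
  show ?thesis
  proof (rule summable_ratio_test[of "1/2" N])
    fix n assume n: "n \<ge> N"
    have nb: "real n + b \<ge> 1" using n N b
      by (smt (verit) abs_ge_zero of_nat_mono)
    define r where "r = rGamma (real n + b + 1)"
    define q where "q = \<bar>z\<bar> ^ n / fact n"
    have r0: "r \<ge> 0" unfolding r_def using b by (intro rGamma_nonneg_real) simp
    have q0: "q \<ge> 0" unfolding q_def by simp
    have e1: "rGamma (real n + b) = (real n + b) * r"
      unfolding r_def using rGamma_plus1[of "real n + b"] by simp
    have L: "norm ((rGamma (real (Suc n) + b) / fact (Suc n)) * z ^ Suc n) = r * q * \<bar>z\<bar> / (real n + 1)"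
      unfolding r_def q_def using r0 r_def
      by (simp add: abs_mult power_abs fact_Suc field_simps add_ac)
    have R: "norm ((rGamma (real n + b) / fact n) * z ^ n) = (real n + b) * r * q"
    proof -
      have "norm ((rGamma (real n + b) / fact n) * z ^ n) = rGamma (real n + b) * q"
        unfolding q_def using rGamma_nonneg_real[of "real n + b"] b
        by (simp add: abs_mult power_abs)
      thus ?thesis using e1 by simp
    qed
    have m1: "1 * (real n + 1) \<le> (real n + b) * (real n + 1)"
      using nb by (intro mult_right_mono) auto
    have "real N \<le> real n" using n by simp
    define P where "P = (real n + b) * (real n + 1)"
    have m2: "real n + 1 \<le> P" using m1 unfolding P_def by simp
    have "\<bar>z\<bar> \<le> P / 2" using m2 N \<open>real N \<le> real n\<close> by linarith
    hence "\<bar>z\<bar> \<le> (real n + b) * (real n + 1) / 2" unfolding P_def .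
    hence "\<bar>z\<bar> / (real n + 1) \<le> 1/2 * (real n + b)"
      by (simp add: divide_le_eq)
    hence "r * q * (\<bar>z\<bar> / (real n + 1)) \<le> r * q * (1/2 * (real n + b))"
      by (intro mult_left_mono) (use r0 q0 in auto)
    thus "norm ((rGamma (real (Suc n) + b) / fact (Suc n)) * z ^ Suc n)
          \<le> 1/2 * norm ((rGamma (real n + b) / fact n) * z ^ n)"
      unfolding L R by (simp add: field_simps)
  qed simp
qed

lemma G_deriv:
  assumes b: "b \<ge> 0"
  shows "(Gs b has_real_derivative Gs (b+1) z) (at z)"
proof -
  have d: "diffs (\<lambda>k. rGamma (real k + b) / fact k) = (\<lambda>k. rGamma (real k + (b+1)) / fact k)"
  proof (rule ext)
    fix k
    have "diffs (\<lambda>k. rGamma (real k + b) / fact k) k = rGamma (real (Suc k) + b) * (real (Suc k) / fact (Suc k))"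
      by (simp add: diffs_def del: of_nat_Suc)
    also have "\<dots> = rGamma (real k + (b+1)) / fact k" unfolding Suc_div_fact by (simp add: add_ac)
    finally show "diffs (\<lambda>k. rGamma (real k + b) / fact k) k = rGamma (real k + (b+1)) / fact k" .
  qed
  show ?thesis
    using termdiffs_strong_converges_everywhere[of "\<lambda>k. rGamma (real k + b) / fact k" z,
          OF summable_G[OF b]]
    unfolding d Gs_def[abs_def] by simp
qed

lemma G_zero: "Gs b 0 = rGamma b"
  unfolding Gs_def using powser_zero[of "\<lambda>k. rGamma (real k + b) / fact k"] by simp

lemma G_pos:
  assumes "b > 0" "z \<ge> 0"
  shows "Gs b z > 0"
proof -
  have "0 < (\<Sum>k. (rGamma (real k + b) / fact k) * z ^ k)"
    by (rule suminf_pos2[where i=0]) (use assms summable_G[of b z] rGamma_nonneg_real rGamma_pos_real[of b] in auto)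
  thus ?thesis unfolding Gs_def .
qed

lemma G_ode:
  assumes b: "b \<ge> 0"
  shows "z * Gs (b+2) z + b * Gs (b+1) z = Gs b z"
proof -
  define T where "T k = (rGamma (real k + b + 1) * real k / fact k) * z ^ k" for k
  have sC: "(\<lambda>k. z * ((rGamma (real k + (b+2)) / fact k) * z ^ k)) sums (z * Gs (b+2) z)"
    unfolding Gs_def using b by (intro sums_mult summable_sums summable_G) simp
  have "(\<lambda>k. T (Suc k)) = (\<lambda>k. z * ((rGamma (real k + (b+2)) / fact k) * z ^ k))"
  proof (rule ext)
    fix k
    have "T (Suc k) = rGamma (real (Suc k) + b + 1) * (real (Suc k) / fact (Suc k)) * z ^ Suc k"
      unfolding T_def by (simp del: of_nat_Suc)
    also have "\<dots> = z * ((rGamma (real k + (b+2)) / fact k) * z ^ k)"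
      unfolding Suc_div_fact by (simp add: add_ac)
    finally show "T (Suc k) = z * ((rGamma (real k + (b+2)) / fact k) * z ^ k)" .
  qed
  with sC have "(\<lambda>k. T (Suc k)) sums (z * Gs (b+2) z)" by simp
  hence sT: "T sums (z * Gs (b+2) z)"
    using sums_Suc_iff[of T] by (simp add: T_def)
  have sB: "(\<lambda>k. b * ((rGamma (real k + (b+1)) / fact k) * z ^ k)) sums (b * Gs (b+1) z)"
    unfolding Gs_def using b by (intro sums_mult summable_sums summable_G) simp
  have "(\<lambda>k. T k + b * ((rGamma (real k + (b+1)) / fact k) * z ^ k)) sums (z * Gs (b+2) z + b * Gs (b+1) z)"
    by (rule sums_add[OF sT sB])
  moreover have "(\<lambda>k. T k + b * ((rGamma (real k + (b+1)) / fact k) * z ^ k))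
     = (\<lambda>k. (rGamma (real k + b) / fact k) * z ^ k)"
  proof (rule ext)
    fix k
    have "rGamma (real k + b) = (real k + b) * rGamma (real k + b + 1)"
      using rGamma_plus1[of "real k + b"] by simp
    thus "T k + b * ((rGamma (real k + (b+1)) / fact k) * z ^ k) = (rGamma (real k + b) / fact k) * z ^ k"
      unfolding T_def by (simp add: field_simps add_ac)
  qed
  ultimately have "(\<lambda>k. (rGamma (real k + b) / fact k) * z ^ k) sums (z * Gs (b+2) z + b * Gs (b+1) z)"
    by simp
  thus ?thesis unfolding Gs_def by (simp add: sums_iff)
qed

lemma crossing:
  fixes f f' :: "real \<Rightarrow> real"
  assumes d: "\<And>z. (f has_real_derivative f' z) (at z)"
    and f0: "f 0 > 0"
    and cr: "\<And>z. z > 0 \<Longrightarrow> f z = 0 \<Longrightarrow> f' z > 0"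
    and z: "z \<ge> 0"
  shows "f z > 0"
proof (rule ccontr)
  assume "\<not> f z > 0"
  hence fz: "f z \<le> 0" by simp
  have cont: "continuous_on A f" for A
    using d by (meson DERIV_continuous continuous_at_imp_continuous_on)
  define S where "S = {t. 0 \<le> t \<and> t \<le> z \<and> f t \<le> 0}"
  have "z \<in> S" using z fz by (simp add: S_def)
  hence Sne: "S \<noteq> {}" by blast
  have bdd: "bdd_below S" unfolding S_def by (rule bdd_belowI[of _ 0]) auto
  have "closed S"
  proof -
    have "S = {0..z} \<inter> f -` {..0}" unfolding S_def by auto
    moreover have "closed ({0..z} \<inter> f -` {..0})"
      using cont[of "{0..z}"] by (intro continuous_closed_preimage) auto
    ultimately show ?thesis by simp
  qed
  define m where "m = Inf S"
  have mS: "m \<in> S" unfolding m_def by (rule closed_contains_Inf[OF Sne bdd \<open>closed S\<close>])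
  have below: "f t > 0" if "0 \<le> t" "t < m" for t
  proof (rule ccontr)
    assume "\<not> f t > 0"
    hence "t \<in> S" using that mS by (auto simp: S_def)
    hence "m \<le> t" unfolding m_def by (rule cInf_lower[OF _ bdd])
    with that show False by simp
  qed
  have m0: "m > 0"
  proof -
    have "m \<ge> 0" "f m \<le> 0" using mS by (auto simp: S_def)
    moreover have "m \<noteq> 0" using f0 \<open>f m \<le> 0\<close> by auto
    ultimately show ?thesis by simp
  qed
  have fm: "f m = 0"
  proof (rule ccontr)
    assume "f m \<noteq> 0"
    hence "f m < 0" using mS by (auto simp: S_def)
    then obtain t where t: "0 \<le> t" "t \<le> m" "f t = 0"
      using IVT2'[of f m 0 0] f0 m0 cont by auto
    hence "t < m" using \<open>f m < 0\<close> by (cases "t = m") auto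
    with below[of t] t show False by simp
  qed
  have "f' m > 0" using cr m0 fm by auto
  then obtain e where e: "e > 0" "\<And>h. h > 0 \<Longrightarrow> h < e \<Longrightarrow> f (m - h) < f m"
    using DERIV_pos_inc_left[OF d] by blast
  define h where "h = min (e/2) (m/2)"
  have "h > 0" "h < e" "h \<le> m/2" using e m0 by (auto simp: h_def)
  hence "f (m - h) < 0" using e fm by auto
  moreover have "f (m - h) > 0" using below \<open>h > 0\<close> \<open>h \<le> m/2\<close> m0 by auto
  ultimately show False by simp
qed

definition Rf :: "real \<Rightarrow> real \<Rightarrow> real \<Rightarrow> real" where
  "Rf b c z = z * (Gs (b+1) z)^2 + c * Gs b z * Gs (b+1) z - (Gs b z)^2"

definition Rf' :: "real \<Rightarrow> real \<Rightarrow> real \<Rightarrow> real" where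
  "Rf' b c z = (Gs (b+1) z)^2 + z * (2 * Gs (b+1) z * Gs (b+2) z)
     + c * (Gs (b+1) z * Gs (b+1) z + Gs b z * Gs (b+2) z) - 2 * Gs b z * Gs (b+1) z"

lemma Rf_deriv:
  assumes b: "b \<ge> 0"
  shows "(Rf b c has_real_derivative Rf' b c z) (at z)"
proof -
  have A: "(Gs b has_real_derivative Gs (b+1) z) (at z)" using G_deriv b by simp
  have B: "(Gs (b+1) has_real_derivative Gs (b+2) z) (at z)" using G_deriv[of "b+1" z] b
    by (simp add: add.assoc)
  show ?thesis unfolding Rf_def[abs_def] Rf'_def
    by (rule derivative_eq_intros A B refl | simp)+ (simp add: algebra_simps power2_eq_square)
qed

lemma zRf':
  assumes b: "b \<ge> 0" and R0: "Rf b c z = 0"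
  shows "z * Rf' b c z = z * (Gs (b+1) z)^2 * (1 - 2*b + 2*c) + c * (c - b) * Gs b z * Gs (b+1) z"
proof -
  define A where "A = Gs b z"
  define B where "B = Gs (b+1) z"
  define C where "C = Gs (b+2) z"
  have ode: "z * C = A - b * B" using G_ode[OF b, of z] unfolding A_def B_def C_def by simp
  have r0: "A^2 = z * B^2 + c * A * B" using R0 unfolding Rf_def A_def B_def by simp
  have "z * Rf' b c z = z * B^2 + 2 * z * B * (z * C) + c * z * B * B + c * A * (z * C) - 2 * z * A * B"
    unfolding Rf'_def A_def B_def C_def by (simp add: algebra_simps power2_eq_square)
  also have "\<dots> = z * B^2 + 2 * z * B * (A - b * B) + c * z * B * B + c * (A^2) - c * b * A * B - 2 * z * A * B"
    unfolding ode by (simp add: algebra_simps power2_eq_square)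
  also have "\<dots> = z * B^2 * (1 - 2*b + 2*c) + c * (c - b) * A * B"
    unfolding r0 by (simp add: algebra_simps power2_eq_square)
  finally show ?thesis unfolding A_def B_def .
qed

lemma Rf0: "Rf b c 0 = rGamma b * rGamma (b+1) * (c - b)"
proof -
  have "rGamma b = b * rGamma (b+1)" using rGamma_plus1[of b] by simp
  thus ?thesis unfolding Rf_def G_zero by (simp add: algebra_simps power2_eq_square)
qed

lemma Rf_pos:
  assumes b: "b > 0" and c: "c > b" and z: "z \<ge> 0"
  shows "Rf b c z > 0"
proof (rule crossing[of "Rf b c" "Rf' b c"])
  show "(Rf b c has_real_derivative Rf' b c t) (at t)" for t using Rf_deriv b by simp
  show "Rf b c 0 > 0" unfolding Rf0 using b c rGamma_pos_real[of b] rGamma_pos_real[of "b+1"] by simp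
  show "Rf' b c t > 0" if t: "t > 0" "Rf b c t = 0" for t
  proof -
    have A: "Gs b t > 0" and B: "Gs (b+1) t > 0" using G_pos b t by auto
    have "t * (Gs (b+1) t)^2 * (1 - 2*b + 2*c) > 0" using t B c by (simp add: mult_pos_pos)
    moreover have "c * (c - b) * Gs b t * Gs (b+1) t > 0" using A B b c by (simp add: mult_pos_pos)
    ultimately have "t * Rf' b c t > 0" unfolding zRf'[OF less_imp_le[OF b] t(2)] by linarith
    thus ?thesis using t by (simp add: zero_less_mult_iff)
  qed
qed (rule z)

lemma Rf_neg:
  assumes b: "b > 0" and c: "c > 0" "c \<le> b - 1/2" and z: "z \<ge> 0"
  shows "Rf b c z < 0"
proof -
  have "- Rf b c z > 0"
  proof (rule crossing[of "\<lambda>t. - Rf b c t" "\<lambda>t. - Rf' b c t"])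
    show "((\<lambda>t. - Rf b c t) has_real_derivative - Rf' b c t) (at t)" for t
      using Rf_deriv b by (intro derivative_intros) simp
    show "- Rf b c 0 > 0" unfolding Rf0 using b c rGamma_pos_real[of b] rGamma_pos_real[of "b+1"]
      by (simp add: mult_pos_neg)
    show "- Rf' b c t > 0" if t: "t > 0" "- Rf b c t = 0" for t
    proof -
      have t2: "Rf b c t = 0" using t by simp
      have A: "Gs b t > 0" and B: "Gs (b+1) t > 0" using G_pos b t by auto
      have "t * (Gs (b+1) t)^2 * (1 - 2*b + 2*c) \<le> 0" using t B c
        by (intro mult_nonneg_nonpos) auto
      moreover have "c * (c - b) * Gs b t * Gs (b+1) t < 0" using A B b c
        by (intro mult_neg_pos mult_pos_neg) auto
      ultimately have "t * Rf' b c t < 0" unfolding zRf'[OF less_imp_le[OF b] t2] by linarith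
      thus ?thesis using t by (simp add: mult_less_0_iff)
    qed
  qed (rule z)
  thus ?thesis by simp
qed

lemma sign_ii:
  assumes mu: "mu \<ge> 0" and x: "x \<ge> 0" and y: "y > 0" and xy: "x > y - mu - 1/2"
  shows "y * Gs (mu+2) (x*y) < Gs (mu+1) (x*y)"
proof (rule ccontr)
  define A where "A = Gs (mu+1) (x*y)"
  define B where "B = Gs (mu+2) (x*y)"
  define c where "c = mu + 1/2"
  assume "\<not> y * Gs (mu+2) (x*y) < Gs (mu+1) (x*y)"
  hence yB: "y * B \<ge> A" unfolding A_def B_def by simp
  have A0: "A > 0" unfolding A_def using mu x y by (intro G_pos) auto
  have B0: "B > 0" unfolding B_def using mu x y by (intro G_pos) auto
  have "Rf (mu+1) c (x*y) < 0" using mu x y by (intro Rf_neg) (auto simp: c_def)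
  hence R: "x*y*B^2 + c*A*B - A^2 < 0" unfolding Rf_def A_def B_def by (simp add: add.assoc)
  have "x * B * A \<le> x * B * (y * B)" using yB x B0 by (intro mult_left_mono) auto
  moreover have "y * (A * B) < (x + c) * (A * B)" using xy A0 B0 by (intro mult_strict_right_mono) (auto simp: c_def)
  moreover have "A * A \<le> A * (y * B)" using yB A0 by (intro mult_left_mono) auto
  ultimately show False using R by (simp add: algebra_simps power2_eq_square)
qed

lemma sign_iii:
  assumes mu: "mu \<ge> 0" and x: "x \<ge> 0" and y: "y > 0" and xy: "x < y - mu - 1"
  shows "y * Gs (mu+2) (x*y) > Gs (mu+1) (x*y)"
proof (rule ccontr)
  define A where "A = Gs (mu+1) (x*y)"
  define B where "B = Gs (mu+2) (x*y)"
  define c where "c = y - x"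
  assume "\<not> y * Gs (mu+2) (x*y) > Gs (mu+1) (x*y)"
  hence yB: "y * B \<le> A" unfolding A_def B_def by simp
  have A0: "A > 0" unfolding A_def using mu x y by (intro G_pos) auto
  have B0: "B > 0" unfolding B_def using mu x y by (intro G_pos) auto
  have "Rf (mu+1) c (x*y) > 0" using mu x y xy by (intro Rf_pos) (auto simp: c_def)
  hence R: "x*y*B^2 + c*A*B - A^2 > 0" unfolding Rf_def A_def B_def by (simp add: add.assoc)
  have "x * B * (y * B) \<le> x * B * A" using yB x B0 by (intro mult_left_mono) auto
  moreover have "A * (y * B) \<le> A * A" using yB A0 by (intro mult_left_mono) auto
  ultimately show False using R by (simp add: algebra_simps power2_eq_square c_def)
qed

lemma sign_i:
  assumes mu: "mu \<ge> 0" and x: "x \<ge> 0" and y: "y > 0" and ym: "y \<le> mu + 1"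
  shows "y * Gs (mu+2) (x*y) - Gs (mu+1) (x*y) \<le> 0 \<and>
         (y * Gs (mu+2) (x*y) - Gs (mu+1) (x*y) = 0 \<longrightarrow> x = 0 \<and> y = mu + 1)"
proof -
  define z where "z = x * y"
  have z0: "z \<ge> 0" using x y by (simp add: z_def)
  define t where "t k = (rGamma (real k + (mu+2)) * (y - real k - mu - 1) / fact k) * z ^ k" for k
  have ts: "t sums (y * Gs (mu+2) z - Gs (mu+1) z)"
  proof -
    have s1: "(\<lambda>k. y * ((rGamma (real k + (mu+2)) / fact k) * z ^ k)) sums (y * Gs (mu+2) z)"
      unfolding Gs_def using mu by (intro sums_mult summable_sums summable_G) simp
    have s2: "(\<lambda>k. (rGamma (real k + (mu+1)) / fact k) * z ^ k) sums (Gs (mu+1) z)"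
      unfolding Gs_def using mu by (intro summable_sums summable_G) simp
    have "(\<lambda>k. y * ((rGamma (real k + (mu+2)) / fact k) * z ^ k) - (rGamma (real k + (mu+1)) / fact k) * z ^ k) = t"
    proof (rule ext)
      fix k
      have "rGamma (real k + (mu+1)) = (real k + mu + 1) * rGamma (real k + (mu+2))"
        using rGamma_plus1[of "real k + mu + 1"] by (simp add: add_ac)
      thus "y * ((rGamma (real k + (mu+2)) / fact k) * z ^ k) - (rGamma (real k + (mu+1)) / fact k) * z ^ k = t k"
        unfolding t_def by (simp add: field_simps)
    qed
    thus ?thesis using sums_diff[OF s1 s2] by simp
  qed
  have tnp: "t k \<le> 0" for k
  proof -
    have "rGamma (real k + (mu+2)) \<ge> 0" using mu by (intro rGamma_nonneg_real) simp
    moreover have "y - real k - mu - 1 \<le> 0" using ym by simp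
    ultimately have "rGamma (real k + (mu+2)) * (y - real k - mu - 1) / fact k \<le> 0"
      by (simp add: mult_nonneg_nonpos divide_nonpos_pos)
    moreover have "z ^ k \<ge> 0" using z0 by simp
    ultimately show ?thesis unfolding t_def by (rule mult_nonpos_nonneg)
  qed
  have le: "y * Gs (mu+2) z - Gs (mu+1) z \<le> 0"
    using ts tnp by (metis sums_le sums_zero)
  have eq: "x = 0 \<and> y = mu + 1" if e: "y * Gs (mu+2) z - Gs (mu+1) z = 0"
  proof (cases "x = 0")
    case True
    have "t 0 = rGamma (mu+2) * (y - mu - 1)" unfolding t_def by simp
    moreover have "y * Gs (mu+2) z - Gs (mu+1) z = t 0"
    proof -
      have "z = 0" using True by (simp add: z_def)
      thus ?thesis using sums_unique[OF ts] unfolding t_def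
        using powser_zero[of "\<lambda>k. rGamma (real k + (mu+2)) * (y - real k - mu - 1) / fact k"] by simp
    qed
    moreover have "rGamma (mu+2) > 0" using mu by (intro rGamma_pos_real) simp
    ultimately show ?thesis using e True by simp
  next
    case False
    hence zp: "z > 0" using x y by (simp add: z_def)
    have "0 < (\<Sum>k. - t k)"
    proof (rule suminf_pos2[where i=1])
      show "summable (\<lambda>k. - t k)" using ts by (intro summable_minus) (auto simp: sums_iff)
      show "0 \<le> - t k" for k using tnp[of k] by simp
      have "rGamma (1 + (mu+2)) > 0" using mu by (intro rGamma_pos_real) simp
      moreover have "y - 1 - mu - 1 < 0" using ym by simp
      ultimately have "rGamma (1 + (mu+2)) * (y - 1 - mu - 1) < 0" by (simp add: mult_pos_neg)
      thus "0 < - t 1" unfolding t_def using zp by (simp add: mult_neg_pos)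
    qed
    moreover have "(\<Sum>k. - t k) = - (y * Gs (mu+2) z - Gs (mu+1) z)"
      using ts by (simp add: sums_iff suminf_minus)
    ultimately show ?thesis using e by simp
  qed
  show ?thesis using le eq unfolding z_def by blast
qed

lemma gamma_abs_int:
  fixes a y :: real
  assumes a: "a > 0" and y: "y \<ge> 0"
  shows "(\<lambda>t. t powr (a-1) * exp (-t)) absolutely_integrable_on {y..}"
    and "integral {y..} (\<lambda>t. t powr (a-1) * exp (-t)) \<le> Gamma a"
proof -
  have eq: "(\<lambda>t. t powr (a-1) * exp (-t)) = (\<lambda>t. t powr (a-1) / exp t)"
    by (rule ext) (simp add: exp_minus divide_inverse)
  have hi: "((\<lambda>t. t powr (a-1) * exp (-t)) has_integral Gamma a) {0..}"
    unfolding eq by (rule Gamma_integral_real[OF a])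
  have ab0: "(\<lambda>t. t powr (a-1) * exp (-t)) absolutely_integrable_on {0..}"
    using hi by (intro nonnegative_absolutely_integrable_1) (auto simp: integrable_on_def)
  show ab: "(\<lambda>t. t powr (a-1) * exp (-t)) absolutely_integrable_on {y..}"
    by (rule set_integrable_subset[OF ab0]) (use y in auto)
  have "integral {y..} (\<lambda>t. t powr (a-1) * exp (-t)) \<le> integral {0..} (\<lambda>t. t powr (a-1) * exp (-t))"
    by (rule integral_subset_le)
       (use y ab hi in \<open>auto simp: absolutely_integrable_on_def integrable_on_def\<close>)
  also have "\<dots> = Gamma a" using hi by (rule integral_unique)
  finally show "integral {y..} (\<lambda>t. t powr (a-1) * exp (-t)) \<le> Gamma a" .
qed

lemma tendsto_integral_Icc_Ici:
  fixes f :: "real \<Rightarrow> real"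
  assumes f: "f absolutely_integrable_on {a..}"
  shows "((\<lambda>b. integral {a..b} f) \<longlongrightarrow> integral {a..} f) at_top"
proof -
  have L: "((\<lambda>b. set_lebesgue_integral lebesgue {a..b} f) \<longlongrightarrow> set_lebesgue_integral lebesgue {a..} f) at_top"
    by (rule tendsto_set_lebesgue_integral_at_top) (use f in auto)
  have e1: "set_lebesgue_integral lebesgue {a..b} f = integral {a..b} f" for b
  proof -
    have "f absolutely_integrable_on {a..b}"
      by (rule set_integrable_subset[OF f]) auto
    thus ?thesis by (rule set_lebesgue_integral_eq_integral(2))
  qed
  have e2: "set_lebesgue_integral lebesgue {a..} f = integral {a..} f"
    using f by (rule set_lebesgue_integral_eq_integral(2))
  show ?thesis using L unfolding e1 e2 .
qed

lemma reg_upper_gamma_0 [simp]: "reg_upper_gamma 0 y = 0"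
  by (simp add: reg_upper_gamma_def)

lemma reg_bounds:
  fixes a y :: real
  assumes a: "a \<ge> 0" and y: "y \<ge> 0"
  shows "reg_upper_gamma a y \<ge> 0" "reg_upper_gamma a y \<le> 1"
proof -
  have "reg_upper_gamma a y \<ge> 0 \<and> reg_upper_gamma a y \<le> 1"
  proof (cases "a = 0")
    case False
    hence a0: "a > 0" using a by simp
    note ab = gamma_abs_int[OF a0 y]
    have I0: "integral {y..} (\<lambda>t. t powr (a-1) * exp (-t)) \<ge> 0"
      by (rule Henstock_Kurzweil_Integration.integral_nonneg)
         (use ab(1) in \<open>auto simp: absolutely_integrable_on_def\<close>)
    have r: "rGamma a > 0" using a0 by (rule rGamma_pos_real)
    have "rGamma a * integral {y..} (\<lambda>t. t powr (a-1) * exp (-t)) \<le> rGamma a * Gamma a"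
      using ab(2) r by (intro mult_left_mono) auto
    also have "rGamma a * Gamma a = 1" unfolding rGamma_inverse_Gamma
    proof (intro left_inverse)
      have "Gamma a > 0" using a0 by (rule Gamma_real_pos)
      thus "Gamma a \<noteq> 0" by simp
    qed
    finally show ?thesis using I0 r unfolding reg_upper_gamma_def by simp
  qed simp
  thus "reg_upper_gamma a y \<ge> 0" "reg_upper_gamma a y \<le> 1" by auto
qed

lemma reg_has_integral:
  fixes a y :: real
  assumes a: "a \<ge> 0" and y: "y \<ge> 0"
  shows "((\<lambda>t. rGamma a * (t powr (a-1) * exp (-t))) has_integral reg_upper_gamma a y) {y..}"
proof (cases "a = 0")
  case True thus ?thesis by simp
next
  case False
  hence a0: "a > 0" using a by simp
  have "(\<lambda>t. t powr (a-1) * exp (-t)) integrable_on {y..}"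
    using gamma_abs_int(1)[OF a0 y] by (simp add: absolutely_integrable_on_def)
  thus ?thesis unfolding reg_upper_gamma_def by (intro has_integral_mult_right) (simp add: has_integral_integral)
qed

lemma reg_recurrence:
  fixes a y :: real
  assumes a: "a \<ge> 0" and y: "y > 0"
  shows "reg_upper_gamma (a+1) y = reg_upper_gamma a y + y powr a * exp (-y) * rGamma (a+1)"
proof (cases "a = 0")
  case True
  have "((\<lambda>t. exp (-1*t)) has_integral exp (-1*y)/1) {y..}"
    by (rule has_integral_exp_minus_to_infinity) simp
  hence "((\<lambda>t. exp (-t)) has_integral exp (-y)) {y..}" by simp
  hence "((\<lambda>t. t powr 0 * exp (-t)) has_integral exp (-y)) {y..}"
    by (rule has_integral_eq[rotated]) (use y in auto)
  hence "integral {y..} (\<lambda>t. t powr 0 * exp (-t)) = exp (-y)" by (rule integral_unique)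
  thus ?thesis using True y unfolding reg_upper_gamma_def by simp
next
  case False
  hence a0: "a > 0" using a by simp
  define h0 where "h0 t = t powr (a-1) * exp (-t)" for t
  define h1 where "h1 t = t powr a * exp (-t)" for t
  have ab0: "h0 absolutely_integrable_on {y..}" unfolding h0_def using gamma_abs_int(1)[OF a0] y by simp
  have ab1: "h1 absolutely_integrable_on {y..}" unfolding h1_def using gamma_abs_int(1)[of "a+1" y] a0 y by simp
  have ftc: "((\<lambda>t. h1 t - a * h0 t) has_integral (y powr a * exp (-y) - Y powr a * exp (-Y))) {y..Y}"
    if Y: "Y \<ge> y" for Y
  proof -
    have "((\<lambda>t. h1 t - a * h0 t) has_integral ((- (Y powr a * exp (-Y))) - (- (y powr a * exp (-y))))) {y..Y}"
    proof (rule fundamental_theorem_of_calculus[OF Y])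
      fix t assume t: "t \<in> {y..Y}"
      hence tp: "t > 0" using y by simp
      have "((\<lambda>t. - (t powr a * exp (-t))) has_real_derivative (h1 t - a * h0 t)) (at t within {y..Y})"
        unfolding h0_def h1_def
        by (rule derivative_eq_intros refl | use tp in simp)+
      thus "((\<lambda>t. - (t powr a * exp (-t))) has_vector_derivative (h1 t - a * h0 t)) (at t within {y..Y})"
        by (simp add: has_real_derivative_iff_has_vector_derivative)
    qed
    thus ?thesis by simp
  qed
  have int0: "h0 integrable_on {y..Y}" for Y
    by (rule set_lebesgue_integral_eq_integral(1), rule set_integrable_subset[OF ab0]) auto
  have int1: "h1 integrable_on {y..Y}" for Y
    by (rule set_lebesgue_integral_eq_integral(1), rule set_integrable_subset[OF ab1]) auto
  have ev: "\<forall>\<^sub>F Y in at_top. integral {y..Y} h1 - a * integral {y..Y} h0 = y powr a * exp (-y) - Y powr a * exp (-Y)"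
  proof (rule eventually_mono[OF eventually_ge_at_top[of y]])
    fix Y assume "Y \<ge> y"
    from integral_unique[OF ftc[OF this]] show "integral {y..Y} h1 - a * integral {y..Y} h0 = y powr a * exp (-y) - Y powr a * exp (-Y)"
      using integral_diff[OF int1[of Y] integrable_on_cmult_left[OF int0[of Y], of a]] by simp
  qed
  have L1: "((\<lambda>Y. integral {y..Y} h1 - a * integral {y..Y} h0) \<longlongrightarrow> integral {y..} h1 - a * integral {y..} h0) at_top"
    by (intro tendsto_intros tendsto_integral_Icc_Ici ab0 ab1)
  have "((\<lambda>Y. y powr a * exp (-y) - Y powr a * exp (-Y)) \<longlongrightarrow> y powr a * exp (-y) - 0) at_top"
    by (intro tendsto_intros) real_asymp
  hence L2: "((\<lambda>Y. integral {y..Y} h1 - a * integral {y..Y} h0) \<longlongrightarrow> y powr a * exp (-y)) at_top"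
    using ev by (simp add: tendsto_cong)
  have I: "integral {y..} h1 - a * integral {y..} h0 = y powr a * exp (-y)"
    using tendsto_unique[OF _ L1 L2] by simp
  have rr: "rGamma a = a * rGamma (a+1)" using rGamma_plus1[of a] by simp
  have "reg_upper_gamma (a+1) y = rGamma (a+1) * integral {y..} h1"
    unfolding reg_upper_gamma_def h1_def by simp
  also have "\<dots> = rGamma (a+1) * (a * integral {y..} h0 + y powr a * exp (-y))" using I by simp
  also have "\<dots> = rGamma a * integral {y..} h0 + y powr a * exp (-y) * rGamma (a+1)"
    unfolding rr by (simp add: algebra_simps)
  also have "rGamma a * integral {y..} h0 = reg_upper_gamma a y" unfolding reg_upper_gamma_def h0_def ..
  finally show ?thesis .
qed

lemma besselI_eq:
  assumes w: "w > 0" and mu: "mu \<ge> 0"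
  shows "besselI (mu - 1) (2 * sqrt w) = w powr ((mu-1)/2) * Gs mu w"
proof -
  have tm: "(2 * sqrt w / 2) powr (2 * real k + (mu - 1)) * rGamma (real k + (mu - 1) + 1) / fact k
      = w powr ((mu-1)/2) * ((rGamma (real k + mu) / fact k) * w ^ k)" for k
  proof -
    have "(2 * sqrt w / 2) powr (2 * real k + (mu - 1)) = (w powr (1/2)) powr (2 * real k + (mu - 1))"
      using w by (simp add: powr_half_sqrt)
    also have "\<dots> = w powr (real k + (mu-1)/2)" by (simp add: powr_powr field_simps)
    also have "\<dots> = w ^ k * w powr ((mu-1)/2)" using w by (simp add: powr_add powr_realpow)
    finally show ?thesis by (simp add: field_simps)
  qed
  have "besselI (mu - 1) (2 * sqrt w) = (\<Sum>k. w powr ((mu-1)/2) * ((rGamma (real k + mu) / fact k) * w ^ k))"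
    unfolding besselI_def tm ..
  also have "\<dots> = w powr ((mu-1)/2) * Gs mu w"
    unfolding Gs_def by (rule suminf_mult) (rule summable_G[OF mu])
  finally show ?thesis .
qed

definition cc :: "real \<Rightarrow> real \<Rightarrow> nat \<Rightarrow> real" where
  "cc mu y k = reg_upper_gamma (real k + mu) y"

definition SS :: "real \<Rightarrow> real \<Rightarrow> real \<Rightarrow> real" where
  "SS mu y x = (\<Sum>k. (cc mu y k / fact k) * x ^ k)"

lemma summable_SS:
  assumes mu: "mu \<ge> 0" and y: "y \<ge> 0"
  shows "summable (\<lambda>k. (cc mu y k / fact k) * x ^ k)"
proof (rule summable_comparison_test'[OF summable_exp[of "\<bar>x\<bar>"]])
  fix k :: nat
  have b: "0 \<le> cc mu y k" "cc mu y k \<le> 1" unfolding cc_def using reg_bounds[of "real k + mu" y] mu y by auto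
  have "norm ((cc mu y k / fact k) * x ^ k) = cc mu y k * (\<bar>x\<bar> ^ k / fact k)"
    using b by (simp add: abs_mult power_abs)
  also have "\<dots> \<le> 1 * (\<bar>x\<bar> ^ k / fact k)" using b by (intro mult_right_mono) auto
  finally show "norm ((cc mu y k / fact k) * x ^ k) \<le> inverse (fact k) * \<bar>x\<bar> ^ k"
    by (simp add: field_simps)
qed

lemma Q_series:
  assumes mu: "mu \<ge> 0" and y: "y > 0" and x: "x \<ge> 0"
  shows "marcum_Q mu x y = exp (-x) * SS mu y x"
proof (cases "x = 0")
  case True
  have "SS mu y 0 = cc mu y 0" unfolding SS_def using powser_zero[of "\<lambda>k. cc mu y k / fact k"] by simp
  thus ?thesis using True unfolding marcum_Q_def cc_def by simp
next
  case False
  hence xp: "x > 0" using x by simp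
  define p where "p = (mu - 1) / 2"
  define K where "K k = x powr p * exp (-x) * x ^ k / fact k" for k
  define v where "v k t = K k * (rGamma (real k + mu) * (t powr (real k + mu - 1) * exp (-t)))" for k t
  define f where "f t = t powr ((mu - 1) / 2) * exp (- t - x) * besselI (mu - 1) (2 * sqrt (x * t))" for t
  have vsum: "(\<lambda>k. v k t) sums f t" if t: "t \<in> {y..}" for t
  proof -
    have tp: "t > 0" using t y by simp
    have xt: "x * t > 0" using tp xp by simp
    define M where "M = t powr p * exp (- t - x) * (x * t) powr p"
    have fe: "f t = M * Gs mu (x * t)"
      unfolding f_def M_def p_def using besselI_eq[OF xt mu] by simp
    have s: "(\<lambda>k. M * ((rGamma (real k + mu) / fact k) * (x * t) ^ k)) sums (M * Gs mu (x * t))"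
      unfolding Gs_def by (intro sums_mult summable_sums summable_G mu)
    have "M * ((rGamma (real k + mu) / fact k) * (x * t) ^ k) = v k t" for k
    proof -
      have e1: "(x * t) powr p = x powr p * t powr p" using xp tp by (simp add: powr_mult)
      have e2: "(x * t) ^ k = x ^ k * t powr (real k)" using tp by (simp add: power_mult_distrib powr_realpow)
      have e3: "t powr p * t powr p * t powr (real k) = t powr (real k + mu - 1)"
      proof -
        have "p + p + real k = real k + mu - 1" unfolding p_def by (simp add: field_simps)
        thus ?thesis unfolding powr_add[symmetric] by (simp only:)
      qed
      have e4: "exp (- t - x) = exp (-x) * exp (-t)" by (simp add: exp_diff exp_minus field_simps)
      have "M * ((rGamma (real k + mu) / fact k) * (x * t) ^ k)
          = (x powr p * exp (-x) * x ^ k / fact k) * (rGamma (real k + mu) * ((t powr p * t powr p * t powr (real k)) * exp (-t)))"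
        unfolding M_def e1 e2 e4 by (simp add: field_simps)
      also have "\<dots> = v k t" unfolding e3 v_def K_def ..
      finally show ?thesis .
    qed
    with s fe show ?thesis by simp
  qed
  have vint: "(v k has_integral (K k * cc mu y k)) {y..}" for k
  proof -
    have "((\<lambda>t. rGamma (real k + mu) * (t powr (real k + mu - 1) * exp (-t))) has_integral cc mu y k) {y..}"
      unfolding cc_def using reg_has_integral[of "real k + mu" y] mu y by simp
    thus ?thesis unfolding v_def[abs_def] by (rule has_integral_mult_right)
  qed
  have Kpos: "K k \<ge> 0" for k unfolding K_def using xp by simp
  have vpos: "v k t \<ge> 0" if "t \<in> {y..}" for k t
  proof -
    have "t > 0" using that y by simp
    moreover have "rGamma (real k + mu) \<ge> 0" using mu by (intro rGamma_nonneg_real) simp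
    ultimately show ?thesis unfolding v_def using Kpos[of k] by simp
  qed
  have lim: "(\<lambda>n. \<Sum>k<n. K k * cc mu y k) \<longlonglongrightarrow> x powr p * exp (-x) * SS mu y x"
  proof -
    have "(\<lambda>k. (x powr p * exp (-x)) * ((cc mu y k / fact k) * x ^ k)) sums (x powr p * exp (-x) * SS mu y x)"
      unfolding SS_def by (intro sums_mult summable_sums summable_SS mu) (use y in simp)
    moreover have "(\<lambda>k. (x powr p * exp (-x)) * ((cc mu y k / fact k) * x ^ k)) = (\<lambda>k. K k * cc mu y k)"
      by (rule ext) (simp add: K_def field_simps)
    ultimately have "(\<lambda>k. K k * cc mu y k) sums (x powr p * exp (-x) * SS mu y x)" by simp
    thus ?thesis by (simp add: sums_def)
  qed
  have hi: "(f has_integral (x powr p * exp (-x) * SS mu y x)) {y..}"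
  proof (rule has_integral_monotone_convergence_increasing[OF _ _ _ lim])
    show "((\<lambda>t. \<Sum>k<n. v k t) has_integral (\<Sum>k<n. K k * cc mu y k)) {y..}" for n
      by (rule has_integral_sum) (auto intro: vint)
    show "(\<Sum>k<n. v k t) \<le> (\<Sum>k<Suc n. v k t)" if "t \<in> {y..}" for n t
      using vpos[OF that, of n] by simp
    show "(\<lambda>n. \<Sum>k<n. v k t) \<longlonglongrightarrow> f t" if "t \<in> {y..}" for t
      using vsum[OF that] by (simp add: sums_def)
  qed
  have "marcum_Q mu x y = x powr ((1 - mu) / 2) * integral {y..} f"
    using False unfolding marcum_Q_def f_def by simp
  also have "\<dots> = x powr ((1 - mu) / 2) * (x powr p * exp (-x) * SS mu y x)"
    using hi by (simp add: integral_unique)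
  also have "x powr ((1 - mu) / 2) * x powr p = 1"
  proof -
    have "(1 - mu) / 2 + p = 0" unfolding p_def by (simp add: field_simps)
    thus ?thesis unfolding powr_add[symmetric] using xp by simp
  qed
  hence "x powr ((1 - mu) / 2) * (x powr p * exp (-x) * SS mu y x) = exp (-x) * SS mu y x"
    by (metis (no_types, lifting) mult.assoc mult_1)
  finally show ?thesis .
qed

definition Q1f :: "real \<Rightarrow> real \<Rightarrow> real \<Rightarrow> real" where
  "Q1f mu y x = exp (-x-y) * y powr mu * Gs (mu+1) (x*y)"

definition Q2f :: "real \<Rightarrow> real \<Rightarrow> real \<Rightarrow> real" where
  "Q2f mu y x = exp (-x-y) * y powr mu * (y * Gs (mu+2) (x*y) - Gs (mu+1) (x*y))"

lemma SS_deriv: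
  assumes mu: "mu \<ge> 0" and y: "y > 0"
  shows "(SS mu y has_real_derivative (\<Sum>k. (cc mu y (Suc k) / fact k) * x ^ k)) (at x)"
proof -
  have d: "diffs (\<lambda>k. cc mu y k / fact k) = (\<lambda>k. cc mu y (Suc k) / fact k)"
  proof (rule ext)
    fix k
    have "diffs (\<lambda>k. cc mu y k / fact k) k = cc mu y (Suc k) * (real (Suc k) / fact (Suc k))"
      by (simp add: diffs_def del: of_nat_Suc)
    also have "\<dots> = cc mu y (Suc k) / fact k" unfolding Suc_div_fact by simp
    finally show "diffs (\<lambda>k. cc mu y k / fact k) k = cc mu y (Suc k) / fact k" .
  qed
  show ?thesis
    using termdiffs_strong_converges_everywhere[of "\<lambda>k. cc mu y k / fact k" x,
          OF summable_SS[OF mu, of y]] y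
    unfolding d SS_def[abs_def] by simp
qed

lemma SS_diff:
  assumes mu: "mu \<ge> 0" and y: "y > 0"
  shows "(\<Sum>k. (cc mu y (Suc k) / fact k) * x ^ k) - SS mu y x = exp (-y) * y powr mu * Gs (mu+1) (x*y)"
proof -
  have s1: "summable (\<lambda>k. (cc mu y (Suc k) / fact k) * x ^ k)"
  proof -
    have "summable (\<lambda>k. diffs (\<lambda>k. cc mu y k / fact k) k * x ^ k)"
      by (rule termdiff_converges_all) (rule summable_SS[OF mu], use y in simp)
    moreover have "diffs (\<lambda>k. cc mu y k / fact k) k = cc mu y (Suc k) / fact k" for k
    proof -
      have "diffs (\<lambda>k. cc mu y k / fact k) k = cc mu y (Suc k) * (real (Suc k) / fact (Suc k))"
        by (simp add: diffs_def del: of_nat_Suc)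
      also have "\<dots> = cc mu y (Suc k) / fact k" unfolding Suc_div_fact by simp
      finally show ?thesis .
    qed
    ultimately show ?thesis by simp
  qed
  have s2: "summable (\<lambda>k. (cc mu y k / fact k) * x ^ k)" using summable_SS[OF mu, of y x] y by simp
  have "(\<Sum>k. (cc mu y (Suc k) / fact k) * x ^ k) - SS mu y x
      = (\<Sum>k. (cc mu y (Suc k) / fact k) * x ^ k - (cc mu y k / fact k) * x ^ k)"
    unfolding SS_def by (rule suminf_diff[OF s1 s2])
  also have "\<dots> = (\<Sum>k. (exp (-y) * y powr mu) * ((rGamma (real k + (mu+1)) / fact k) * (x*y) ^ k))"
  proof (rule suminf_cong)
    fix k
    have "cc mu y (Suc k) - cc mu y k = y powr (real k + mu) * exp (-y) * rGamma (real k + mu + 1)"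
      unfolding cc_def using reg_recurrence[of "real k + mu" y] mu y by (simp add: add_ac)
    moreover have "y powr (real k + mu) = y ^ k * y powr mu" using y by (simp add: powr_add powr_realpow)
    ultimately have "(cc mu y (Suc k) / fact k) * x ^ k - (cc mu y k / fact k) * x ^ k
        = (y ^ k * y powr mu * exp (-y) * rGamma (real k + mu + 1)) / fact k * x ^ k"
      by (simp add: field_simps)
    also have "\<dots> = (exp (-y) * y powr mu) * ((rGamma (real k + (mu+1)) / fact k) * (x*y) ^ k)"
      by (simp add: field_simps power_mult_distrib add_ac)
    finally show "(cc mu y (Suc k) / fact k) * x ^ k - (cc mu y k / fact k) * x ^ k
        = (exp (-y) * y powr mu) * ((rGamma (real k + (mu+1)) / fact k) * (x*y) ^ k)" .
  qed
  also have "\<dots> = exp (-y) * y powr mu * Gs (mu+1) (x*y)"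
    unfolding Gs_def by (rule suminf_mult) (rule summable_G, use mu in simp)
  finally show ?thesis .
qed

lemma Q0_deriv:
  assumes mu: "mu \<ge> 0" and y: "y > 0"
  shows "((\<lambda>s. exp (-s) * SS mu y s) has_real_derivative Q1f mu y x) (at x)"
proof -
  have "((\<lambda>s. exp (-s) * SS mu y s) has_real_derivative
          (- exp (-x)) * SS mu y x + exp (-x) * (\<Sum>k. (cc mu y (Suc k) / fact k) * x ^ k)) (at x)"
    by (rule derivative_eq_intros SS_deriv[OF mu y] refl | simp)+
  moreover have "(- exp (-x)) * SS mu y x + exp (-x) * (\<Sum>k. (cc mu y (Suc k) / fact k) * x ^ k)
      = exp (-x) * ((\<Sum>k. (cc mu y (Suc k) / fact k) * x ^ k) - SS mu y x)"
    by (simp add: algebra_simps)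
  moreover have "exp (-x) * ((\<Sum>k. (cc mu y (Suc k) / fact k) * x ^ k) - SS mu y x) = Q1f mu y x"
    unfolding SS_diff[OF mu y] Q1f_def by (simp add: exp_diff exp_minus field_simps)
  ultimately show ?thesis by simp
qed

lemma Q1_deriv:
  assumes mu: "mu \<ge> 0"
  shows "(Q1f mu y has_real_derivative Q2f mu y x) (at x)"
proof -
  have G1: "(Gs (mu+1) has_real_derivative Gs (mu+2) z) (at z)" for z
    using G_deriv[of "mu+1" z] mu by (simp add: add.assoc)
  have "(Q1f mu y has_real_derivative
          exp (-x-y) * (-1) * y powr mu * Gs (mu+1) (x*y) + exp (-x-y) * y powr mu * (Gs (mu+2) (x*y) * y)) (at x)"
    unfolding Q1f_def[abs_def]
    by (rule derivative_eq_intros DERIV_chain2[OF G1] refl | simp)+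
  moreover have "exp (-x-y) * (-1) * y powr mu * Gs (mu+1) (x*y) + exp (-x-y) * y powr mu * (Gs (mu+2) (x*y) * y)
     = Q2f mu y x" unfolding Q2f_def by (simp add: algebra_simps)
  ultimately show ?thesis by simp
qed

lemma nontriv: "x \<ge> (0::real) \<Longrightarrow> at x within {0..} \<noteq> bot"
proof -
  assume x: "x \<ge> 0"
  have "x islimpt {x..x+1}" by simp
  hence "x islimpt {0..}" by (rule islimpt_subset) (use x in auto)
  thus ?thesis using trivial_limit_within by blast
qed

lemma dx_eq:
  assumes mu: "mu \<ge> 0" and y: "y > 0" and x: "x \<ge> 0"
  shows "((\<lambda>s. marcum_Q mu s y) has_real_derivative Q1f mu y x) (at x within {0..})"
    and "marcum_Q_dx mu y x = Q1f mu y x"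
proof -
  show D: "((\<lambda>s. marcum_Q mu s y) has_real_derivative Q1f mu y x) (at x within {0..})"
  proof (rule has_field_derivative_transform_within[of "\<lambda>s. exp (-s) * SS mu y s" _ _ _ 1])
    show "((\<lambda>s. exp (-s) * SS mu y s) has_real_derivative Q1f mu y x) (at x within {0..})"
      by (rule has_field_derivative_at_within[OF Q0_deriv[OF mu y]])
  qed (use x Q_series[OF mu y] in auto)
  show "marcum_Q_dx mu y x = Q1f mu y x"
    unfolding marcum_Q_dx_def
  proof (rule the_equality)
    fix D' assume "((\<lambda>s. marcum_Q mu s y) has_real_derivative D') (at x within {0..})"
    thus "D' = Q1f mu y x" by (rule has_field_derivative_unique[OF _ D nontriv[OF x]])
  qed (rule D)
qed

lemma dxx_eq:
  assumes mu: "mu \<ge> 0" and y: "y > 0" and x: "x \<ge> 0"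
  shows "((\<lambda>s. marcum_Q_dx mu y s) has_real_derivative Q2f mu y x) (at x within {0..})"
    and "marcum_Q_dxx mu y x = Q2f mu y x"
proof -
  show D: "((\<lambda>s. marcum_Q_dx mu y s) has_real_derivative Q2f mu y x) (at x within {0..})"
  proof (rule has_field_derivative_transform_within[of "Q1f mu y" _ _ _ 1])
    show "(Q1f mu y has_real_derivative Q2f mu y x) (at x within {0..})"
      by (rule has_field_derivative_at_within[OF Q1_deriv[OF mu]])
  qed (use x dx_eq(2)[OF mu y] in auto)
  show "marcum_Q_dxx mu y x = Q2f mu y x"
    unfolding marcum_Q_dxx_def
  proof (rule the_equality)
    fix D' assume "(marcum_Q_dx mu y has_real_derivative D') (at x within {0..})"
    thus "D' = Q2f mu y x" by (rule has_field_derivative_unique[OF _ D nontriv[OF x]])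
  qed (rule D)
qed

theorem theorem1:
  fixes mu :: real
  assumes "mu \<ge> 0"
  shows "(\<forall>x y. 0 \<le> x \<and> 0 < y \<longrightarrow>
            ((\<lambda>s. marcum_Q mu s y) has_real_derivative marcum_Q_dx mu y x) (at x within {0..}) \<and>
            ((\<lambda>s. marcum_Q_dx mu y s) has_real_derivative marcum_Q_dxx mu y x) (at x within {0..}))
       \<and> (\<forall>x y. 0 \<le> x \<and> 0 < y \<and> y \<le> mu + 1 \<longrightarrow>
            marcum_Q_dxx mu y x \<le> 0 \<and> (marcum_Q_dxx mu y x = 0 \<longrightarrow> x = 0 \<and> y = mu + 1))
       \<and> (\<forall>x y. 0 \<le> x \<and> 0 < y \<and> x > y - mu - 1/2 \<longrightarrow> marcum_Q_dxx mu y x < 0)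
       \<and> (\<forall>x y. 0 \<le> x \<and> 0 < y \<and> x < y - mu - 1 \<longrightarrow> marcum_Q_dxx mu y x > 0)"
proof -
  note mu = assms
  have E: "exp (-x-y) * y powr mu > 0" if "y > 0" for x y :: real using that by simp
  have Q2: "marcum_Q_dxx mu y x = (exp (-x-y) * y powr mu) * (y * Gs (mu+2) (x*y) - Gs (mu+1) (x*y))"
    if "0 \<le> x" "0 < y" for x y using dxx_eq(2)[OF mu that(2,1)] unfolding Q2f_def by simp
  have C1: "\<forall>x y. 0 \<le> x \<and> 0 < y \<longrightarrow>
            ((\<lambda>s. marcum_Q mu s y) has_real_derivative marcum_Q_dx mu y x) (at x within {0..}) \<and>
            ((\<lambda>s. marcum_Q_dx mu y s) has_real_derivative marcum_Q_dxx mu y x) (at x within {0..})"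
    using dx_eq[OF mu] dxx_eq[OF mu] by simp
  have C2: "\<forall>x y. 0 \<le> x \<and> 0 < y \<and> y \<le> mu + 1 \<longrightarrow>
            marcum_Q_dxx mu y x \<le> 0 \<and> (marcum_Q_dxx mu y x = 0 \<longrightarrow> x = 0 \<and> y = mu + 1)"
  proof (intro allI impI)
    fix x y :: real assume h: "0 \<le> x \<and> 0 < y \<and> y \<le> mu + 1"
    hence x: "0 \<le> x" and y: "0 < y" and ym: "y \<le> mu + 1" by auto
    note si = sign_i[OF mu x y ym]
    have "marcum_Q_dxx mu y x \<le> 0" unfolding Q2[OF x y]
      by (intro mult_nonneg_nonpos) (use E[OF y, of x] si in auto)
    moreover have "x = 0 \<and> y = mu + 1" if "marcum_Q_dxx mu y x = 0"
    proof -
      have "y * Gs (mu+2) (x*y) - Gs (mu+1) (x*y) = 0"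
        using that E[OF y, of x] y unfolding Q2[OF x y] by simp
      thus ?thesis using si by simp
    qed
    ultimately show "marcum_Q_dxx mu y x \<le> 0 \<and> (marcum_Q_dxx mu y x = 0 \<longrightarrow> x = 0 \<and> y = mu + 1)"
      by blast
  qed
  have C3: "\<forall>x y. 0 \<le> x \<and> 0 < y \<and> x > y - mu - 1/2 \<longrightarrow> marcum_Q_dxx mu y x < 0"
  proof (intro allI impI)
    fix x y :: real assume h: "0 \<le> x \<and> 0 < y \<and> x > y - mu - 1/2"
    hence x: "0 \<le> x" and y: "0 < y" and xy: "x > y - mu - 1/2" by auto
    show "marcum_Q_dxx mu y x < 0" unfolding Q2[OF x y] using sign_ii[OF mu x y xy] E[OF y, of x]
      by (simp add: mult_pos_neg)
  qed
  have C4: "\<forall>x y. 0 \<le> x \<and> 0 < y \<and> x < y - mu - 1 \<longrightarrow> marcum_Q_dxx mu y x > 0"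
  proof (intro allI impI)
    fix x y :: real assume h: "0 \<le> x \<and> 0 < y \<and> x < y - mu - 1"
    hence x: "0 \<le> x" and y: "0 < y" and xy: "x < y - mu - 1" by auto
    show "marcum_Q_dxx mu y x > 0" unfolding Q2[OF x y] using sign_iii[OF mu x y xy] E[OF y, of x]
      by (simp add: mult_pos_pos)
  qed
  show ?thesis using C1 C2 C3 C4 by blast
qed

end
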